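(* For $\Sigma(p_1,p_2,p_3)$ with $\frac1{p_1}+\frac1{p_2}+\frac1{p_3}<1$ and for $\Sigma(2,3,5)$, the coefficients satisfy $\lambda_0=1$, \[ \lambda_1=-\frac14\Bigl(\phi+P\Bigl(1-\frac1{p_1^2}-\frac1{p_2^2}-\frac1{p_3^2}\Bigr)\Bigr), \] \[ \lambda_2=\frac1{12}\Biggl(\frac{3\phi^2+12\phi-4}8+\frac{3P}4(\phi+2)\Bigl(1-\sum_{j=1}^3\frac1{p_j^2}\Bigr)+\frac{P^2}8\Bigl(2\Bigl(1-\sum_{j=1}^3\frac1{p_j^4}\Bigr)+5\Bigl(1-\sum_{j=1}^3\frac1{p_j^2}\Bigr)^2\Bigr)\Biggr), \] where $\phi=\phi(p_1,p_2,p_3)$.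
   Context: $p_1,p_2,p_3$ pairwise coprime positive integers, $P=p_1p_2p_3$, $\phi=3-\frac1P+12(s(p_2p_3,p_1)+s(p_1p_3,p_2)+s(p_1p_2,p_3))$ with Dedekind sums $s(b,a)=\sum_{k=1}^{a-1}((k/a))((kb/a))$. The $\lambda_n$ are the coefficients of the formal power series $\tau_\infty=\sum_n\lambda_n(q-1)^n$ defined by: for $\sum1/p_j<1$, $q^{\phi/4-1/2}(q-1)\tau_\infty=\frac12\sum_{k\ge0}\frac{L(-2k,\chi_{2P}^{(1,1,1)})}{k!}(\frac{\log q}{4P})^k$, and for $\Sigma(2,3,5)$, $q^{121/120}(q-1)\tau_\infty=q^{1/120}+\frac12\sum_{k\ge0}\frac{L(-2k,\chi_{60}^{(1,1,1)})}{k!}(\frac{\log q}{120})^k$. Here $\chi_{2P}^{(1,1,1)}$ is the odd $2P$-periodic function with $\chi(n)=1$ if $n\equiv P(1+\sum_j\varepsilon_j/p_j)\pmod{2P}$ with signs of product $-1$, $-1$ if product $1$, $0$ otherwise ($\chi_{60}^{(1,1,1)}$ is $-1$ on $1,11,19,29$ and $+1$ on $31,41,49,59$ mod $60$); $L(-2k,\chi)=-\frac{(2P)^{2k}}{2k+1}\sum_{j=1}^{2P}\chi(j)B_{2k+1}(j/(2P))$, $B_n$ Bernoulli polynomials. *)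

theory Defs
  imports "HOL-Analysis.Analysis" "HOL-Computational_Algebra.Formal_Power_Series"
begin

definition sawtooth :: "real \<Rightarrow> real" where
  "sawtooth x = (if x \<in> \<int> then 0 else x - of_int \<lfloor>x\<rfloor> - 1/2)"

definition dedekind_sum :: "nat \<Rightarrow> nat \<Rightarrow> real" where
  "dedekind_sum b a = (\<Sum>k\<in>{1..<a}. sawtooth (real k / real a) * sawtooth (real (k * b) / real a))"

definition phi_inv :: "nat \<Rightarrow> nat \<Rightarrow> nat \<Rightarrow> real" where
  "phi_inv p1 p2 p3 = 3 - 1 / real (p1 * p2 * p3)
     + 12 * (dedekind_sum (p2 * p3) p1 + dedekind_sum (p1 * p3) p2 + dedekind_sum (p1 * p2) p3)"

text \<open>Bernoulli numbers (convention B_1 = -1/2) and Bernoulli polynomials.\<close>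
fun bernoulli_num :: "nat \<Rightarrow> real" where
  "bernoulli_num n = (if n = 0 then 1 else
     - (\<Sum>k\<in>{..<n}. real ((n + 1) choose k) * bernoulli_num k) / real (n + 1))"

definition bernoulli_poly :: "nat \<Rightarrow> real \<Rightarrow> real" where
  "bernoulli_poly n x = (\<Sum>k\<le>n. real (n choose k) * bernoulli_num k * x ^ (n - k))"

text \<open>Residue P(1 + e1/p1 + e2/p2 + e3/p3) (an integer).\<close>
definition chi_res :: "nat \<Rightarrow> nat \<Rightarrow> nat \<Rightarrow> int \<Rightarrow> int \<Rightarrow> int \<Rightarrow> int" where
  "chi_res p1 p2 p3 e1 e2 e3 = int (p1 * p2 * p3) + e1 * int (p2 * p3) + e2 * int (p1 * p3) + e3 * int (p1 * p2)"

definition chi111 :: "nat \<Rightarrow> nat \<Rightarrow> nat \<Rightarrow> int \<Rightarrow> real" where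
  "chi111 p1 p2 p3 n =
    (if \<exists>e1\<in>{-1,1}. \<exists>e2\<in>{-1,1}. \<exists>e3\<in>{-1,1}. e1 * e2 * e3 = -1 \<and>
          n mod (2 * int (p1 * p2 * p3)) = chi_res p1 p2 p3 e1 e2 e3 mod (2 * int (p1 * p2 * p3)) then 1
     else if \<exists>e1\<in>{-1,1}. \<exists>e2\<in>{-1,1}. \<exists>e3\<in>{-1,1}. e1 * e2 * e3 = 1 \<and>
          n mod (2 * int (p1 * p2 * p3)) = chi_res p1 p2 p3 e1 e2 e3 mod (2 * int (p1 * p2 * p3)) then -1
     else 0)"

text \<open>L(-2k, chi) via Bernoulli polynomials.\<close>
definition L_val :: "nat \<Rightarrow> nat \<Rightarrow> nat \<Rightarrow> nat \<Rightarrow> real" where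
  "L_val p1 p2 p3 k = - ((2 * real (p1 * p2 * p3)) ^ (2 * k) / real (2 * k + 1))
     * (\<Sum>j\<in>{1..2 * p1 * p2 * p3}. chi111 p1 p2 p3 (int j)
          * bernoulli_poly (2 * k + 1) (real j / (2 * real (p1 * p2 * p3))))"

text \<open>Formal power series in the variable X = q - 1: log q = ln(1+X) = fps_ln 1,
  q^a = (1+X)^a = fps_binomial a.\<close>
definition L_series :: "nat \<Rightarrow> nat \<Rightarrow> nat \<Rightarrow> real \<Rightarrow> real fps" where
  "L_series p1 p2 p3 c =
     Abs_fps (\<lambda>k. L_val p1 p2 p3 k / fact k) oo (fps_const (1 / c) * fps_ln 1)"

definition tau_eq_hyp :: "nat \<Rightarrow> nat \<Rightarrow> nat \<Rightarrow> real fps \<Rightarrow> bool" where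
  "tau_eq_hyp p1 p2 p3 \<tau> \<longleftrightarrow>
     fps_binomial (phi_inv p1 p2 p3 / 4 - 1/2) * fps_X * \<tau>
       = fps_const (1/2) * L_series p1 p2 p3 (4 * real (p1 * p2 * p3))"

definition tau_eq_235 :: "real fps \<Rightarrow> bool" where
  "tau_eq_235 \<tau> \<longleftrightarrow>
     fps_binomial (121/120) * fps_X * \<tau>
       = fps_binomial (1/120) + fps_const (1/2) * L_series 2 3 5 120"

end

theory Submission
  imports Defs
begin

lemma bn_Suc: "bernoulli_num (Suc n) = - (\<Sum>k<Suc n. real (Suc (Suc n) choose k) * bernoulli_num k) / real (Suc (Suc n))"
  by (subst bernoulli_num.simps) simp

lemma bn0: "bernoulli_num 0 = 1" by simp
lemma bn1: "bernoulli_num 1 = -1/2" using bn_Suc[of 0] by simp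
lemma bn2: "bernoulli_num 2 = 1/6" using bn_Suc[of 1] by (simp add: lessThan_Suc bn1 numeral_2_eq_2)
lemma bn3: "bernoulli_num 3 = 0" using bn_Suc[of 2] by (simp add: lessThan_Suc bn1 bn2 eval_nat_numeral)
lemma bn4: "bernoulli_num 4 = -1/30" using bn_Suc[of 3] by (simp add: lessThan_Suc bn1 bn2 bn3 eval_nat_numeral)
lemma bn5: "bernoulli_num 5 = 0" using bn_Suc[of 4] by (simp add: lessThan_Suc bn1 bn2 bn3 bn4 eval_nat_numeral)
lemma bn6: "bernoulli_num 6 = 1/42" using bn_Suc[of 5] by (simp add: lessThan_Suc bn1 bn2 bn3 bn4 bn5 eval_nat_numeral)
lemma bn7: "bernoulli_num 7 = 0" using bn_Suc[of 6] by (simp add: lessThan_Suc bn1 bn2 bn3 bn4 bn5 bn6 eval_nat_numeral)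

lemma bp1: "bernoulli_poly 1 x = x - 1/2"
  by (simp add: bernoulli_poly_def atMost_Suc bn1)
lemma bp3: "bernoulli_poly 3 x = x^3 - 3/2*x^2 + 1/2*x"
  by (simp add: bernoulli_poly_def atMost_Suc bn1 bn2 bn3 eval_nat_numeral)
lemma bp5: "bernoulli_poly 5 x = x^5 - 5/2*x^4 + 5/3*x^3 - 1/6*x"
  by (simp add: bernoulli_poly_def atMost_Suc bn1 bn2 bn3 bn4 bn5 eval_nat_numeral)
lemma bp7: "bernoulli_poly 7 x = x^7 - 7/2*x^6 + 7/2*x^5 - 7/6*x^3 + 1/6*x"
  by (simp add: bernoulli_poly_def atMost_Suc bn1 bn2 bn3 bn4 bn5 bn6 bn7 eval_nat_numeral)

definition E3 :: "(int \<times> int \<times> int) set" where "E3 = {-1,1} \<times> {-1,1} \<times> {-1,1}"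
definition sg :: "int \<times> int \<times> int \<Rightarrow> int" where "sg e = - (fst e * fst (snd e) * snd (snd e))"

lemma E3_explicit: "E3 = {(1,1,1),(1,1,-1),(1,-1,1),(1,-1,-1),(-1,1,1),(-1,1,-1),(-1,-1,1),(-1,-1,-1)}"
  by (auto simp: E3_def)

lemma sum_E3: "(\<Sum>e\<in>E3. g e) = g (1,1,1) + g (1,1,-1) + g (1,-1,1) + g (1,-1,-1) + g (-1,1,1) + g (-1,1,-1) + g (-1,-1,1) + g (-1,-1,-1)"
  unfolding E3_explicit by (simp add: add.assoc)

definition T8 :: "(real \<Rightarrow> real) \<Rightarrow> real \<Rightarrow> real \<Rightarrow> real \<Rightarrow> real" where
 "T8 f a b c = (\<Sum>e\<in>E3. of_int (sg e) * f ((1 + of_int (fst e) * a + of_int (fst (snd e)) * b + of_int (snd (snd e)) * c) / 2))"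
lemma T1: "T8 (bernoulli_poly 1) a b c = 0" unfolding T8_def sum_E3 bp1 by (simp add: sg_def field_simps)
lemma T3: "T8 (bernoulli_poly 3) a b c = -6*a*b*c" unfolding T8_def sum_E3 bp3 by (simp add: sg_def field_simps) algebra
lemma T5: "T8 (bernoulli_poly 5) a b c = 5*a*b*c*(1-a^2-b^2-c^2)" unfolding T8_def sum_E3 bp5 by (simp add: sg_def field_simps) algebra
lemma T7: "T8 (bernoulli_poly 7) a b c = a*b*c*(-49/8 + 35/4*(a^2+b^2+c^2) - 21/8*(a^4+b^4+c^4) - 35/4*(a^2*b^2+a^2*c^2+b^2*c^2))"
  unfolding T8_def sum_E3 bp7 by (simp add: sg_def field_simps) algebra

definition rr :: "nat \<Rightarrow> nat \<Rightarrow> nat \<Rightarrow> int \<times> int \<times> int \<Rightarrow> int" where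
  "rr p1 p2 p3 e = chi_res p1 p2 p3 (fst e) (fst (snd e)) (snd (snd e)) mod (2 * int (p1 * p2 * p3))"

lemma finite_E3: "finite E3" by (simp add: E3_def)

lemma prod_E3: "e \<in> E3 \<Longrightarrow> fst e * fst (snd e) * snd (snd e) = 1 \<or> fst e * fst (snd e) * snd (snd e) = -1"
  by (auto simp: E3_def)

lemma chi_eq:
  assumes inj: "inj_on (rr p1 p2 p3) E3"
  shows "chi111 p1 p2 p3 n = (\<Sum>e\<in>E3. of_int (sg e) * (if n mod (2 * int (p1 * p2 * p3)) = rr p1 p2 p3 e then 1 else 0))"
proof -
  define M where "M = 2 * int (p1 * p2 * p3)"
  have ex_iff: "(\<exists>e1\<in>{-1,1}. \<exists>e2\<in>{-1,1}. \<exists>e3\<in>{-1,1}. e1*e2*e3 = s \<and> n mod M = chi_res p1 p2 p3 e1 e2 e3 mod M)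
     \<longleftrightarrow> (\<exists>e\<in>E3. fst e * fst (snd e) * snd (snd e) = s \<and> n mod M = rr p1 p2 p3 e)" for s
    unfolding E3_def rr_def M_def by auto
  have chi: "chi111 p1 p2 p3 n = (if \<exists>e\<in>E3. fst e * fst (snd e) * snd (snd e) = -1 \<and> n mod M = rr p1 p2 p3 e then 1
     else if \<exists>e\<in>E3. fst e * fst (snd e) * snd (snd e) = 1 \<and> n mod M = rr p1 p2 p3 e then -1 else 0)"
    unfolding chi111_def M_def[symmetric] ex_iff by simp
  show ?thesis
  proof (cases "\<exists>e0\<in>E3. n mod M = rr p1 p2 p3 e0")
    case True
    then obtain e0 where e0: "e0 \<in> E3" "n mod M = rr p1 p2 p3 e0" by blast
    have uniq: "e \<in> E3 \<Longrightarrow> (n mod M = rr p1 p2 p3 e) \<longleftrightarrow> e = e0" for e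
      using inj e0 unfolding inj_on_def by metis
    have "(\<Sum>e\<in>E3. of_int (sg e) * (if n mod M = rr p1 p2 p3 e then 1 else 0)) =
          (\<Sum>e\<in>E3. if e = e0 then real_of_int (sg e) else 0)"
      by (rule sum.cong) (auto simp: uniq)
    also have "\<dots> = of_int (sg e0)" using e0 finite_E3 by simp
    finally have s: "(\<Sum>e\<in>E3. of_int (sg e) * (if n mod M = rr p1 p2 p3 e then 1 else 0)) = real_of_int (sg e0)" .
    have c1: "(\<exists>e\<in>E3. fst e * fst (snd e) * snd (snd e) = s \<and> n mod M = rr p1 p2 p3 e) \<longleftrightarrow>
              fst e0 * fst (snd e0) * snd (snd e0) = s" for s
      using uniq e0 by auto
    obtain t where t: "fst e0 * fst (snd e0) * snd (snd e0) = t" by blast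
    have sgt: "sg e0 = - t" using t by (simp add: sg_def)
    have t1: "t = 1 \<or> t = -1" using prod_E3[OF e0(1)] t by simp
    have "chi111 p1 p2 p3 n = (if t = -1 then 1 else if t = 1 then -1 else 0)" unfolding chi c1 t by simp
    then have "chi111 p1 p2 p3 n = real_of_int (sg e0)" using t1 sgt by auto
    with s show ?thesis by (simp add: M_def)
  next
    case False
    then show ?thesis unfolding chi M_def[symmetric] by auto
  qed
qed

lemma chi_sum:
  fixes f :: "nat \<Rightarrow> real"
  assumes inj: "inj_on (rr p1 p2 p3) E3" and nz: "\<forall>e\<in>E3. rr p1 p2 p3 e \<noteq> 0" and pos: "p1 * p2 * p3 > 0"
  shows "(\<Sum>j\<in>{1..2*p1*p2*p3}. chi111 p1 p2 p3 (int j) * f j) = (\<Sum>e\<in>E3. of_int (sg e) * f (nat (rr p1 p2 p3 e)))"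
proof -
  define M where "M = 2 * int (p1 * p2 * p3)"
  have Mpos: "M > 0" using pos by (simp add: M_def)
  have key: "(int j mod M = rr p1 p2 p3 e) \<longleftrightarrow> j = nat (rr p1 p2 p3 e)" if j: "j \<in> {1..2*p1*p2*p3}" and e: "e \<in> E3" for j e
  proof -
    have r0: "0 \<le> rr p1 p2 p3 e" "rr p1 p2 p3 e < M" using Mpos unfolding rr_def M_def by auto
    have r1: "rr p1 p2 p3 e \<noteq> 0" using nz e by auto
    have "j \<le> 2*(p1*p2*p3)" using j by (simp add: mult.assoc)
    then have "int j \<le> int (2*(p1*p2*p3))" by linarith
    then have jM: "int j \<le> M" "1 \<le> int j" using j by (auto simp: M_def)
    show ?thesis
    proof
      assume h: "int j mod M = rr p1 p2 p3 e"
      show "j = nat (rr p1 p2 p3 e)"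
      proof (cases "int j = M")
        case True then show ?thesis using h r1 by simp
      next
        case False
        then have "int j mod M = int j" using jM by (intro mod_pos_pos_trivial) auto
        then show ?thesis using h by simp
      qed
    next
      assume "j = nat (rr p1 p2 p3 e)"
      then have "int j = rr p1 p2 p3 e" using r0 by simp
      then show "int j mod M = rr p1 p2 p3 e" using r0 by (simp add: mod_pos_pos_trivial)
    qed
  qed
  have mem: "nat (rr p1 p2 p3 e) \<in> {1..2*p1*p2*p3}" if e: "e \<in> E3" for e
  proof -
    have r0: "0 \<le> rr p1 p2 p3 e" "rr p1 p2 p3 e < M" using Mpos unfolding rr_def M_def by auto
    have r1: "rr p1 p2 p3 e \<noteq> 0" using nz e by auto
    show ?thesis using r0 r1 unfolding M_def by (auto simp: nat_le_iff mult.assoc)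
  qed
  have "(\<Sum>j\<in>{1..2*p1*p2*p3}. chi111 p1 p2 p3 (int j) * f j)
     = (\<Sum>j\<in>{1..2*p1*p2*p3}. \<Sum>e\<in>E3. of_int (sg e) * (if int j mod M = rr p1 p2 p3 e then 1 else 0) * f j)"
    unfolding chi_eq[OF inj] M_def by (simp add: sum_distrib_right)
  also have "\<dots> = (\<Sum>e\<in>E3. \<Sum>j\<in>{1..2*p1*p2*p3}. of_int (sg e) * (if int j mod M = rr p1 p2 p3 e then 1 else 0) * f j)"
    by (rule sum.swap)
  also have "\<dots> = (\<Sum>e\<in>E3. \<Sum>j\<in>{1..2*p1*p2*p3}. if j = nat (rr p1 p2 p3 e) then of_int (sg e) * f j else 0)"
    by (intro sum.cong refl) (auto simp: key)
  also have "\<dots> = (\<Sum>e\<in>E3. of_int (sg e) * f (nat (rr p1 p2 p3 e)))"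
    by (intro sum.cong refl) (use mem in simp)
  finally show ?thesis .
qed


lemma pm1_diff: "(x::int) \<in> {-1,1} \<Longrightarrow> y \<in> {-1,1} \<Longrightarrow> \<exists>d. d \<in> {-1,0,1} \<and> x - y = 2*d \<and> (d = 0 \<longleftrightarrow> x = y)"
  by auto

lemma d_zero:
  fixes p q r :: nat and d1 d2 d3 :: int
  assumes "coprime p q" "coprime p r" "p \<ge> 2" "d1 \<in> {-1,0,1}"
    and eq: "d1 * int (q*r) + d2 * int (p*r) + d3 * int (p*q) = 0"
  shows "d1 = 0"
proof -
  have "int p dvd d1 * int (q*r)"
  proof -
    have "d1 * int (q*r) = - (int p * (d2 * int r + d3 * int q))" using eq by (simp add: algebra_simps)
    then show ?thesis by (metis dvd_minus_iff dvd_triv_left)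
  qed
  moreover have "coprime (int p) (int (q*r))" using assms(1,2) by simp
  ultimately have "int p dvd d1" using coprime_dvd_mult_left_iff by blast
  then show ?thesis using assms(3,4) by auto
qed

lemma hyp_facts:
  fixes p1 p2 p3 :: nat
  assumes pos: "p1 > 0" "p2 > 0" "p3 > 0" and cop: "coprime p1 p2" "coprime p1 p3" "coprime p2 p3"
    and hyp: "1 / real p1 + 1 / real p2 + 1 / real p3 < 1"
  shows "inj_on (rr p1 p2 p3) E3" "\<forall>e\<in>E3. rr p1 p2 p3 e \<noteq> 0"
    "\<And>e. e \<in> E3 \<Longrightarrow> rr p1 p2 p3 e = chi_res p1 p2 p3 (fst e) (fst (snd e)) (snd (snd e))"
    "\<And>e. e \<in> E3 \<Longrightarrow> chi_res p1 p2 p3 (fst e) (fst (snd e)) (snd (snd e)) > 0"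
    "p1 \<ge> 2" "p2 \<ge> 2" "p3 \<ge> 2"
proof -
  have ge2: "p \<ge> 2" if "p > 0" "1 / real p < 1" for p :: nat
  proof (rule ccontr)
    assume "\<not> p \<ge> 2" then have "p = 1" using that by auto
    then show False using that by simp
  qed
  have i1: "1 / real p1 < 1" using hyp pos by (smt (verit) divide_nonneg_nonneg of_nat_0_le_iff)
  have i2: "1 / real p2 < 1" using hyp pos by (smt (verit) divide_nonneg_nonneg of_nat_0_le_iff)
  have i3: "1 / real p3 < 1" using hyp pos by (smt (verit) divide_nonneg_nonneg of_nat_0_le_iff)
  show g1: "p1 \<ge> 2" using ge2 pos i1 by blast
  show g2: "p2 \<ge> 2" using ge2 pos i2 by blast
  show g3: "p3 \<ge> 2" using ge2 pos i3 by blast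
  define A where "A = int (p2*p3)"
  define B where "B = int (p1*p3)"
  define C where "C = int (p1*p2)"
  define P where "P = int (p1*p2*p3)"
  have "real_of_int (A + B + C) < real_of_int P"
  proof -
    have "real p2*real p3 + real p1*real p3 + real p1*real p2 < real p1*real p2*real p3"
      using hyp pos by (simp add: field_simps)
    then show ?thesis by (simp add: A_def B_def C_def P_def)
  qed
  then have ABC: "A + B + C < P" by linarith
  have Apos: "A > 0" "B > 0" "C > 0" using pos by (auto simp: A_def B_def C_def)
  have cr: "chi_res p1 p2 p3 e1 e2 e3 = P + e1*A + e2*B + e3*C" for e1 e2 e3
    by (simp add: chi_res_def A_def B_def C_def P_def)
  have bnd: "0 < chi_res p1 p2 p3 (fst e) (fst (snd e)) (snd (snd e)) \<and> chi_res p1 p2 p3 (fst e) (fst (snd e)) (snd (snd e)) < 2 * P" if "e \<in> E3" for e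
    using that ABC Apos unfolding cr E3_def by auto
  show "chi_res p1 p2 p3 (fst e) (fst (snd e)) (snd (snd e)) > 0" if "e \<in> E3" for e using bnd[OF that] by simp
  show rr_eq: "rr p1 p2 p3 e = chi_res p1 p2 p3 (fst e) (fst (snd e)) (snd (snd e))" if "e \<in> E3" for e
    using bnd[OF that] unfolding rr_def P_def by (simp add: mod_pos_pos_trivial)
  show "\<forall>e\<in>E3. rr p1 p2 p3 e \<noteq> 0" using rr_eq bnd by (metis less_irrefl)
  show "inj_on (rr p1 p2 p3) E3"
  proof (rule inj_onI)
    fix e e' assume e: "e \<in> E3" and e': "e' \<in> E3" and h: "rr p1 p2 p3 e = rr p1 p2 p3 e'"
    obtain x1 x2 x3 where ex: "e = (x1,x2,x3)" by (cases e) auto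
    obtain y1 y2 y3 where ey: "e' = (y1,y2,y3)" by (cases e') auto
    have xs: "x1 \<in> {-1,1}" "x2 \<in> {-1,1}" "x3 \<in> {-1,1}" using e ex by (auto simp: E3_def)
    have ys: "y1 \<in> {-1,1}" "y2 \<in> {-1,1}" "y3 \<in> {-1,1}" using e' ey by (auto simp: E3_def)
    obtain d1 where d1: "d1 \<in> {-1,0,1}" "x1 - y1 = 2*d1" "d1 = 0 \<longleftrightarrow> x1 = y1" using pm1_diff[OF xs(1) ys(1)] by blast
    obtain d2 where d2: "d2 \<in> {-1,0,1}" "x2 - y2 = 2*d2" "d2 = 0 \<longleftrightarrow> x2 = y2" using pm1_diff[OF xs(2) ys(2)] by blast
    obtain d3 where d3: "d3 \<in> {-1,0,1}" "x3 - y3 = 2*d3" "d3 = 0 \<longleftrightarrow> x3 = y3" using pm1_diff[OF xs(3) ys(3)] by blast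
    have "P + x1*A + x2*B + x3*C = P + y1*A + y2*B + y3*C" using h rr_eq[OF e] rr_eq[OF e'] ex ey cr by simp
    then have "(x1 - y1)*A + (x2 - y2)*B + (x3 - y3)*C = 0" by (simp add: algebra_simps)
    then have eq: "d1*A + d2*B + d3*C = 0" using d1 d2 d3 by (simp add: algebra_simps)
    have "d1 = 0" using d_zero[of p1 p2 p3 d1 d2 d3] cop g1 d1 eq by (simp add: A_def B_def C_def)
    moreover have "d2 = 0" using d_zero[of p2 p1 p3 d2 d1 d3] cop g2 d2 eq
      by (simp add: A_def B_def C_def coprime_commute algebra_simps)
    moreover have "d3 = 0" using d_zero[of p3 p1 p2 d3 d1 d2] cop g3 d3 eq
      by (simp add: A_def B_def C_def coprime_commute algebra_simps)
    ultimately show "e = e'" using ex ey d1 d2 d3 by simp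
  qed
qed

lemma L_hyp:
  fixes p1 p2 p3 :: nat
  assumes pos: "p1 > 0" "p2 > 0" "p3 > 0" and cop: "coprime p1 p2" "coprime p1 p3" "coprime p2 p3"
    and hyp: "1 / real p1 + 1 / real p2 + 1 / real p3 < 1"
  shows "L_val p1 p2 p3 k = - ((2 * real (p1*p2*p3)) ^ (2*k) / real (2*k+1))
            * T8 (bernoulli_poly (2*k+1)) (1 / real p1) (1 / real p2) (1 / real p3)"
proof -
  note hf = hyp_facts[OF pos cop hyp]
  have Ppos: "p1*p2*p3 > 0" using pos by simp
  have "(\<Sum>j\<in>{1..2 * p1 * p2 * p3}. chi111 p1 p2 p3 (int j) * bernoulli_poly (2 * k + 1) (real j / (2 * real (p1 * p2 * p3))))
     = (\<Sum>e\<in>E3. of_int (sg e) * bernoulli_poly (2 * k + 1) (real (nat (rr p1 p2 p3 e)) / (2 * real (p1 * p2 * p3))))"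
    by (rule chi_sum[OF hf(1) hf(2) Ppos])
  also have "\<dots> = T8 (bernoulli_poly (2*k+1)) (1 / real p1) (1 / real p2) (1 / real p3)"
    unfolding T8_def
  proof (intro sum.cong refl)
    fix e assume e: "e \<in> E3"
    have r1: "real (nat (rr p1 p2 p3 e)) = real_of_int (chi_res p1 p2 p3 (fst e) (fst (snd e)) (snd (snd e)))"
      using hf(3)[OF e] hf(4)[OF e] by simp
    have eq: "real (nat (rr p1 p2 p3 e)) / (2 * real (p1 * p2 * p3)) = (1 + of_int (fst e) * (1 / real p1) + of_int (fst (snd e)) * (1 / real p2) + of_int (snd (snd e)) * (1 / real p3)) / 2"
      unfolding r1 using pos by (simp add: chi_res_def field_simps)
    show "of_int (sg e) * bernoulli_poly (2 * k + 1) (real (nat (rr p1 p2 p3 e)) / (2 * real (p1 * p2 * p3))) =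
         of_int (sg e) * bernoulli_poly (2 * k + 1) ((1 + of_int (fst e) * (1 / real p1) + of_int (fst (snd e)) * (1 / real p2) + of_int (snd (snd e)) * (1 / real p3)) / 2)"
      by (simp only: eq)
  qed
  finally show ?thesis unfolding L_val_def by simp
qed


lemma pow_nth:
  fixes Y :: "real fps" assumes Y0: "fps_nth Y 0 = 0"
  shows "fps_nth (Y^2) 2 = (fps_nth Y 1)^2" "fps_nth (Y^2) 3 = 2 * fps_nth Y 1 * fps_nth Y 2" "fps_nth (Y^3) 3 = (fps_nth Y 1)^3"
    "fps_nth (Y^2) 0 = 0" "fps_nth (Y^2) 1 = 0" "fps_nth (Y^3) 0 = 0" "fps_nth (Y^3) 1 = 0" "fps_nth (Y^3) 2 = 0"
proof -
  have sq: "fps_nth (Y^2) n = (\<Sum>i=0..n. fps_nth Y i * fps_nth Y (n-i))" for n by (simp add: power2_eq_square fps_mult_nth)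
  show a: "fps_nth (Y^2) 2 = (fps_nth Y 1)^2" "fps_nth (Y^2) 3 = 2 * fps_nth Y 1 * fps_nth Y 2" "fps_nth (Y^2) 0 = 0" "fps_nth (Y^2) 1 = 0"
    unfolding sq using Y0 by (simp_all add: numeral_3_eq_3 numeral_2_eq_2 power2_eq_square)
  have cu: "fps_nth (Y^3) n = (\<Sum>i=0..n. fps_nth Y i * fps_nth (Y^2) (n-i))" for n
    by (simp add: power3_eq_cube fps_mult_nth power2_eq_square mult.assoc)
  show "fps_nth (Y^3) 3 = (fps_nth Y 1)^3" "fps_nth (Y^3) 0 = 0" "fps_nth (Y^3) 1 = 0" "fps_nth (Y^3) 2 = 0"
    unfolding cu using Y0 a by (simp_all add: numeral_3_eq_3 numeral_2_eq_2 power2_eq_square power3_eq_cube)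
qed

lemma comp_nth:
  fixes A Y :: "real fps" assumes Y0: "fps_nth Y 0 = 0"
  shows "fps_nth (A oo Y) 0 = fps_nth A 0" "fps_nth (A oo Y) 1 = fps_nth A 1 * fps_nth Y 1" "fps_nth (A oo Y) 2 = fps_nth A 1 * fps_nth Y 2 + fps_nth A 2 * (fps_nth Y 1)^2"
    "fps_nth (A oo Y) 3 = fps_nth A 1 * fps_nth Y 3 + 2 * fps_nth A 2 * fps_nth Y 1 * fps_nth Y 2 + fps_nth A 3 * (fps_nth Y 1)^3"
  using pow_nth[OF Y0] Y0 by (simp_all add: fps_compose_nth numeral_3_eq_3 numeral_2_eq_2)

lemma Lser_nth:
  fixes C :: real and p1 p2 p3 :: nat
  defines "L \<equiv> L_val p1 p2 p3"
  shows "fps_nth (L_series p1 p2 p3 C) 0 = L 0"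
    "fps_nth (L_series p1 p2 p3 C) 1 = L 1 / C"
    "fps_nth (L_series p1 p2 p3 C) 2 = - L 1 / (2*C) + L 2 / (2 * C^2)"
    "fps_nth (L_series p1 p2 p3 C) 3 = L 1 / (3*C) - L 2 / (2*C^2) + L 3 / (6 * C^3)"
proof -
  let ?Y = "fps_const (1 / C) * fps_ln (1::real)"
  have Y0: "fps_nth ?Y 0 = 0" by (simp add: fps_ln_nth)
  have Yn: "fps_nth ?Y 1 = 1/C" "fps_nth ?Y 2 = -1/(2*C)" "fps_nth ?Y 3 = 1/(3*C)" by (simp_all add: fps_ln_nth numeral_3_eq_3 numeral_2_eq_2)
  note c = comp_nth[OF Y0, of "Abs_fps (\<lambda>k. L_val p1 p2 p3 k / fact k)"]
  show "fps_nth (L_series p1 p2 p3 C) 0 = L 0" "fps_nth (L_series p1 p2 p3 C) 1 = L 1 / C"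
    "fps_nth (L_series p1 p2 p3 C) 2 = - L 1 / (2*C) + L 2 / (2 * C^2)"
    "fps_nth (L_series p1 p2 p3 C) 3 = L 1 / (3*C) - L 2 / (2*C^2) + L 3 / (6 * C^3)"
    unfolding L_series_def c Yn L_def by (simp_all add: fact_numeral power2_eq_square power3_eq_cube field_simps)
qed

lemma tau_solve:
  fixes a :: real and R :: "real fps"
  assumes "fps_binomial a * fps_X * \<tau> = R"
  shows "fps_nth \<tau> 0 = fps_nth R 1" "fps_nth \<tau> 1 = fps_nth R 2 - a * fps_nth R 1" "fps_nth \<tau> 2 = fps_nth R 3 - a * fps_nth \<tau> 1 - a * (a - 1) / 2 * fps_nth \<tau> 0"
proof -
  have e: "fps_nth R (Suc n) = fps_nth (fps_binomial a * \<tau>) n" for n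
    unfolding assms[symmetric] by (simp add: mult.commute mult.left_commute)
  have g2: "a gchoose 2 = a * (a - 1) / 2" by (simp add: gbinomial_prod_rev numeral_2_eq_2)
  have m: "fps_nth (fps_binomial a * \<tau>) n = (\<Sum>i=0..n. (a gchoose i) * fps_nth \<tau> (n - i))" for n
    by (simp add: fps_mult_nth)
  show "fps_nth \<tau> 0 = fps_nth R 1" using e[of 0] m[of 0] by simp
  show "fps_nth \<tau> 1 = fps_nth R 2 - a * fps_nth R 1" using e[of 1] m[of 1] e[of 0] m[of 0] by (simp add: numeral_2_eq_2)
  show "fps_nth \<tau> 2 = fps_nth R 3 - a * fps_nth \<tau> 1 - a * (a - 1) / 2 * fps_nth \<tau> 0"
    using e[of 2] m[of 2] g2 by (simp add: numeral_3_eq_3 numeral_2_eq_2)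
qed

lemma tau_exists_unique:
  fixes a :: real and R :: "real fps"
  assumes "fps_nth R 0 = 0"
  shows "\<exists>!\<tau>. fps_binomial a * fps_X * \<tau> = R"
proof
  let ?t = "fps_shift 1 R * fps_binomial (-a)"
  have "fps_binomial a * fps_X * ?t = (fps_shift 1 R * fps_X) * (fps_binomial a * fps_binomial (-a))"
    by (simp add: algebra_simps)
  also have "fps_binomial a * fps_binomial (-a) = 1" by (simp flip: fps_binomial_add_mult)
  also have "fps_shift 1 R * fps_X = R"
    using assms by (intro fps_ext) (simp add: mult.commute)
  finally show "fps_binomial a * fps_X * ?t = R" by simp
next
  fix t assume h: "fps_binomial a * fps_X * t = R"
  have nz: "fps_binomial a * fps_X \<noteq> (0 :: real fps)"
  proof
    assume "fps_binomial a * fps_X = (0 :: real fps)"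
    then have "fps_nth (fps_binomial a * fps_X) 1 = (0::real)" by simp
    then show False by (simp add: mult.commute)
  qed
  have "fps_binomial a * fps_X * t = fps_binomial a * fps_X * (fps_shift 1 R * fps_binomial (-a))"
  proof -
    have "fps_binomial a * fps_X * (fps_shift 1 R * fps_binomial (-a)) = (fps_shift 1 R * fps_X) * (fps_binomial a * fps_binomial (-a))"
      by (simp add: algebra_simps)
    also have "fps_binomial a * fps_binomial (-a) = 1" by (simp flip: fps_binomial_add_mult)
    also have "fps_shift 1 R * fps_X = R"
      using assms by (intro fps_ext) (simp add: mult.commute)
    finally show ?thesis using h by simp
  qed
  then show "t = fps_shift 1 R * fps_binomial (-a)" using nz by simp
qed


lemma main_hyp:
  fixes p1 p2 p3 :: nat
  assumes pos: "p1 > 0" "p2 > 0" "p3 > 0" and cop: "coprime p1 p2" "coprime p1 p3" "coprime p2 p3"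
    and hyp: "1 / real p1 + 1 / real p2 + 1 / real p3 < 1"
  defines "\<phi> \<equiv> phi_inv p1 p2 p3"
      and "P \<equiv> real (p1 * p2 * p3)"
      and "S2 \<equiv> 1 / real p1 ^ 2 + 1 / real p2 ^ 2 + 1 / real p3 ^ 2"
      and "S4 \<equiv> 1 / real p1 ^ 4 + 1 / real p2 ^ 4 + 1 / real p3 ^ 4"
  shows "(\<exists>!\<tau>. tau_eq_hyp p1 p2 p3 \<tau>) \<and> (\<exists>\<tau>. tau_eq_hyp p1 p2 p3 \<tau> \<and>
           fps_nth \<tau> 0 = 1 \<and>
           fps_nth \<tau> 1 = - (1/4) * (\<phi> + P * (1 - S2)) \<and>
           fps_nth \<tau> 2 = (1/12) * ((3 * \<phi>^2 + 12 * \<phi> - 4) / 8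
                             + (3 * P / 4) * (\<phi> + 2) * (1 - S2)
                             + (P^2 / 8) * (2 * (1 - S4) + 5 * (1 - S2)^2)))"
proof -
  define R where "R = fps_const (1/2 :: real) * L_series p1 p2 p3 (4 * real (p1 * p2 * p3))"
  define a where "a = \<phi> / 4 - 1/2"
  have E: "tau_eq_hyp p1 p2 p3 \<tau> \<longleftrightarrow> fps_binomial a * fps_X * \<tau> = R" for \<tau>
    unfolding tau_eq_hyp_def R_def a_def \<phi>_def by simp
  have LH: "L_val p1 p2 p3 k = - ((2 * real (p1*p2*p3)) ^ (2*k) / real (2*k+1))
            * T8 (bernoulli_poly n) (1 / real p1) (1 / real p2) (1 / real p3)" if "n = 2*k+1" for n k
    using L_hyp[OF pos cop hyp, of k] that by simp
  define x where "x = real p1"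
  define y where "y = real p2"
  define z where "z = real p3"
  have xyz: "x > 0" "y > 0" "z > 0" using pos by (auto simp: x_def y_def z_def)
  have L0: "L_val p1 p2 p3 0 = 0" using LH[of 1 0, simplified] T1 by simp
  have L1: "L_val p1 p2 p3 1 = 8*x*y*z"
  proof -
    have "L_val p1 p2 p3 1 = - ((2 * (x*y*z)) ^ 2 / 3) * T8 (bernoulli_poly 3) (1/x) (1/y) (1/z)"
      using LH[of 3 1] by (simp add: x_def y_def z_def)
    also have "\<dots> = 8*x*y*z" using xyz by (simp add: T3 field_simps power2_eq_square)
    finally show ?thesis .
  qed
  have L2: "L_val p1 p2 p3 2 = -16 * (x*y*z)^3 * (1 - 1/x^2 - 1/y^2 - 1/z^2)"
  proof -
    have gen: "- ((2 * (x*y*z)) ^ 4 / 5) * (5 * (1/x) * (1/y) * (1/z) * Q) = -16*(x*y*z)^3*Q" for Q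
      using xyz by (simp add: field_simps power_mult_distrib eval_nat_numeral)
    have "L_val p1 p2 p3 2 = - ((2 * (x*y*z)) ^ 4 / 5) * T8 (bernoulli_poly 5) (1/x) (1/y) (1/z)"
      using LH[of 5 2] by (simp add: x_def y_def z_def)
    also have "\<dots> = -16 * (x*y*z)^3 * (1 - 1/x^2 - 1/y^2 - 1/z^2)"
      unfolding T5 power_one_over by (rule gen)
    finally show ?thesis .
  qed
  have L3: "L_val p1 p2 p3 3 = -(64/7) * (x*y*z)^5 * (-49/8 + 35/4*(1/x^2+1/y^2+1/z^2) - 21/8*(1/x^4+1/y^4+1/z^4) - 35/4*(1/x^2*(1/y^2)+1/x^2*(1/z^2)+1/y^2*(1/z^2)))"
  proof -
    have gen: "- ((2 * (x*y*z)) ^ 6 / 7) * (1/x*(1/y)*(1/z)*Q) = -(64/7)*(x*y*z)^5*Q" for Q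
      using xyz by (simp add: field_simps power_mult_distrib eval_nat_numeral)
    have "L_val p1 p2 p3 3 = - ((2 * (x*y*z)) ^ 6 / 7) * T8 (bernoulli_poly 7) (1/x) (1/y) (1/z)"
      using LH[of 7 3] by (simp add: x_def y_def z_def)
    also have "\<dots> = -(64/7) * (x*y*z)^5 * (-49/8 + 35/4*(1/x^2+1/y^2+1/z^2) - 21/8*(1/x^4+1/y^4+1/z^4) - 35/4*(1/x^2*(1/y^2)+1/x^2*(1/z^2)+1/y^2*(1/z^2)))"
      unfolding T7 power_one_over by (rule gen)
    finally show ?thesis .
  qed
  have Pdef: "P = x*y*z" by (simp add: P_def x_def y_def z_def)
  have S2: "S2 = 1/x^2 + 1/y^2 + 1/z^2" by (simp add: S2_def x_def y_def z_def)
  have S4: "S4 = 1/x^4 + 1/y^4 + 1/z^4" by (simp add: S4_def x_def y_def z_def)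
  have Rn: "fps_nth R n = 1/2 * fps_nth (L_series p1 p2 p3 (4 * real (p1 * p2 * p3))) n" for n
    by (simp add: R_def)
  note LS = Lser_nth[of p1 p2 p3 "4 * real (p1 * p2 * p3)"]
  have R0: "fps_nth R 0 = 0" unfolding Rn LS L0 by simp
  have R1: "fps_nth R 1 = 1" unfolding Rn LS L1 using xyz by (simp add: x_def y_def z_def field_simps)
  have ex: "\<exists>!\<tau>. fps_binomial a * fps_X * \<tau> = R" by (rule tau_exists_unique[OF R0])
  then obtain \<tau> where t: "fps_binomial a * fps_X * \<tau> = R" by blast
  note ts = tau_solve[OF t]
  have t0: "fps_nth \<tau> 0 = 1" using ts R1 by simp
  have t1: "fps_nth \<tau> 1 = - (1/4) * (\<phi> + P * (1 - S2))"
    unfolding ts R1 unfolding Rn LS L1 L2 Pdef S2 a_def using xyz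
    by (simp add: x_def[symmetric] y_def[symmetric] z_def[symmetric] field_simps) algebra
  have t2: "fps_nth \<tau> 2 = (1/12) * ((3 * \<phi>^2 + 12 * \<phi> - 4) / 8
                             + (3 * P / 4) * (\<phi> + 2) * (1 - S2)
                             + (P^2 / 8) * (2 * (1 - S4) + 5 * (1 - S2)^2))"
    unfolding ts(3) t1 t0 unfolding Rn LS L1 L2 L3 Pdef S2 S4 a_def using xyz
    by (simp add: x_def[symmetric] y_def[symmetric] z_def[symmetric] field_simps) algebra
  show ?thesis unfolding E using ex t t0 t1 t2 by blast
qed


lemma saw_nat:
  assumes "a > 0"
  shows "sawtooth (real k / real a) = (if k mod a = 0 then 0 else real (k mod a) / real a - 1/2)"
proof -
  have dec: "real k / real a = real (k div a) + real (k mod a) / real a"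
  proof -
    have "real k = real (k div a) * real a + real (k mod a)" by (metis div_mult_mod_eq of_nat_add of_nat_mult)
    then show ?thesis using assms by (simp add: field_simps)
  qed
  show ?thesis
  proof (cases "k mod a = 0")
    case True
    then have "real k / real a = of_int (int (k div a))" using dec by simp
    then have "real k / real a \<in> \<int>" by (metis Ints_of_int)
    then show ?thesis using True by (simp add: sawtooth_def)
  next
    case False
    have f0: "0 < real (k mod a) / real a" using False assms by simp
    have f1: "real (k mod a) / real a < 1" using assms by simp
    have fl: "\<lfloor>real k / real a\<rfloor> = int (k div a)"
      unfolding dec using f0 f1 by (simp add: floor_eq_iff)
    have ni: "real k / real a \<notin> \<int>"
    proof
      assume "real k / real a \<in> \<int>"
      then obtain m where m: "real k / real a = of_int m" by (auto elim: Ints_cases)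
      then have "m = int (k div a)" using fl by simp
      then show False using m dec f0 by simp
    qed
    show ?thesis using False ni fl dec by (simp add: sawtooth_def)
  qed
qed

lemma ds2: "dedekind_sum 15 2 = 0"
proof -
  have p: "(0::nat) < 2" by simp
  have s: "{1..<2::nat} = {1}" by auto
  show ?thesis unfolding dedekind_sum_def saw_nat[OF p] s by simp
qed

lemma ds3: "dedekind_sum 10 3 = 1/18"
proof -
  have p: "(0::nat) < 3" by simp
  have s: "{1..<3::nat} = {1,2}" by auto
  show ?thesis unfolding dedekind_sum_def saw_nat[OF p] s by simp
qed

lemma ds5: "dedekind_sum 6 5 = 1/5"
proof -
  have p: "(0::nat) < 5" by simp
  have s: "{1..<5::nat} = {1,2,3,4}" by auto
  show ?thesis unfolding dedekind_sum_def saw_nat[OF p] s by simp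
qed

lemma phi235: "phi_inv 2 3 5 = 181/30"
  unfolding phi_inv_def using ds2 ds3 ds5 by simp


lemma rr235: "rr 2 3 5 (1,1,1) = 1" "rr 2 3 5 (1,1,-1) = 49" "rr 2 3 5 (1,-1,1) = 41" "rr 2 3 5 (1,-1,-1) = 29"
  "rr 2 3 5 (-1,1,1) = 31" "rr 2 3 5 (-1,1,-1) = 19" "rr 2 3 5 (-1,-1,1) = 11" "rr 2 3 5 (-1,-1,-1) = 59"
  by (simp_all add: rr_def chi_res_def)

lemma inj235: "inj_on (rr 2 3 5) E3"
  unfolding E3_explicit inj_on_def by (simp add: rr235)

lemma nz235: "\<forall>e\<in>E3. rr 2 3 5 e \<noteq> 0"
  unfolding E3_explicit by (simp add: rr235)

lemma L235:
  "L_val 2 3 5 k = - ((60::real) ^ (2*k) / real (2*k+1)) *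
     (- bernoulli_poly (2*k+1) (1/60) + bernoulli_poly (2*k+1) (49/60) + bernoulli_poly (2*k+1) (41/60) - bernoulli_poly (2*k+1) (29/60)
      + bernoulli_poly (2*k+1) (31/60) - bernoulli_poly (2*k+1) (19/60) - bernoulli_poly (2*k+1) (11/60) + bernoulli_poly (2*k+1) (59/60))"
proof -
  have "(\<Sum>j\<in>{1..2 * 2 * 3 * 5}. chi111 2 3 5 (int j) * bernoulli_poly (2 * k + 1) (real j / (2 * real (2 * 3 * 5::nat))))
     = (\<Sum>e\<in>E3. of_int (sg e) * bernoulli_poly (2 * k + 1) (real (nat (rr 2 3 5 e)) / (2 * real (2 * 3 * 5::nat))))"
    by (rule chi_sum[OF inj235 nz235]) simp
  then show ?thesis unfolding L_val_def sum_E3 by (simp add: rr235 sg_def)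
qed

lemma L235v: "L_val 2 3 5 0 = -2" "L_val 2 3 5 1 = 238" "L_val 2 3 5 2 = -258722" "L_val 2 3 5 3 = 707703118"
proof -
  have LH: "L_val 2 3 5 k = - ((60::real) ^ (2*k) / real (2*k+1)) *
     (- bernoulli_poly n (1/60) + bernoulli_poly n (49/60) + bernoulli_poly n (41/60) - bernoulli_poly n (29/60)
      + bernoulli_poly n (31/60) - bernoulli_poly n (19/60) - bernoulli_poly n (11/60) + bernoulli_poly n (59/60))"
    if "n = 2*k+1" for n k using L235[of k] that by simp
  show "L_val 2 3 5 0 = -2" using LH[of 1 0, unfolded bp1] by (simp add: power_divide)
  show "L_val 2 3 5 1 = 238" using LH[of 3 1] by (simp add: bp3 power_divide)
  show "L_val 2 3 5 2 = -258722" using LH[of 5 2] by (simp add: bp5 power_divide)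
  show "L_val 2 3 5 3 = 707703118" using LH[of 7 3] by (simp add: bp7 power_divide)
qed


lemma main_235:
  defines "\<phi> \<equiv> phi_inv 2 3 5"
      and "P \<equiv> real ((2::nat) * 3 * 5)"
      and "S2 \<equiv> 1 / real (2::nat) ^ 2 + 1 / real (3::nat) ^ 2 + 1 / real (5::nat) ^ 2"
      and "S4 \<equiv> 1 / real (2::nat) ^ 4 + 1 / real (3::nat) ^ 4 + 1 / real (5::nat) ^ 4"
  shows "(\<exists>!\<tau>. tau_eq_235 \<tau>) \<and> (\<exists>\<tau>. tau_eq_235 \<tau> \<and>
           fps_nth \<tau> 0 = 1 \<and>
           fps_nth \<tau> 1 = - (1/4) * (\<phi> + P * (1 - S2)) \<and>
           fps_nth \<tau> 2 = (1/12) * ((3 * \<phi>^2 + 12 * \<phi> - 4) / 8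
                             + (3 * P / 4) * (\<phi> + 2) * (1 - S2)
                             + (P^2 / 8) * (2 * (1 - S4) + 5 * (1 - S2)^2)))"
proof -
  define R where "R = fps_binomial (1/120) + fps_const (1/2 :: real) * L_series 2 3 5 120"
  define a :: real where "a = 121/120"
  have E: "tau_eq_235 \<tau> \<longleftrightarrow> fps_binomial a * fps_X * \<tau> = R" for \<tau>
    unfolding tau_eq_235_def R_def a_def by simp
  have g1: "(1/120::real) gchoose 1 = 1/120" by simp
  have g2: "(1/120::real) gchoose 2 = (1/120) * (1/120 - 1) / 2" by (simp add: gbinomial_prod_rev numeral_2_eq_2)
  have g3: "(1/120::real) gchoose 3 = (1/120) * (1/120 - 1) * (1/120 - 2) / 6"
    by (simp add: gbinomial_prod_rev numeral_3_eq_3 fact_numeral)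
  have Rn: "fps_nth R n = ((1/120::real) gchoose n) + 1/2 * fps_nth (L_series 2 3 5 120) n" for n
    by (simp add: R_def)
  note LS = Lser_nth[of 2 3 5 120]
  note LV = L235v
  have R0: "fps_nth R 0 = 0" unfolding Rn LS LV by simp
  have R1: "fps_nth R 1 = 1" unfolding Rn LS LV g1 by simp
  have ex: "\<exists>!\<tau>. fps_binomial a * fps_X * \<tau> = R" by (rule tau_exists_unique[OF R0])
  then obtain \<tau> where t: "fps_binomial a * fps_X * \<tau> = R" by blast
  note ts = tau_solve[OF t]
  have t0: "fps_nth \<tau> 0 = 1" using ts R1 by simp
  have t1: "fps_nth \<tau> 1 = - (1/4) * (\<phi> + P * (1 - S2))"
    unfolding ts R1 unfolding Rn LS LV g2 a_def \<phi>_def phi235 P_def S2_def by simp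
  have t2: "fps_nth \<tau> 2 = (1/12) * ((3 * \<phi>^2 + 12 * \<phi> - 4) / 8
                             + (3 * P / 4) * (\<phi> + 2) * (1 - S2)
                             + (P^2 / 8) * (2 * (1 - S4) + 5 * (1 - S2)^2))"
    unfolding ts(3) t1 t0 unfolding Rn LS LV g3 a_def \<phi>_def phi235 P_def S2_def S4_def by (simp add: power_divide power2_eq_square)
  show ?thesis unfolding E using ex t t0 t1 t2 by blast
qed

theorem mainTheorem7:
  fixes p1 p2 p3 :: nat
  assumes cases: "(p1 > 0 \<and> p2 > 0 \<and> p3 > 0 \<and> coprime p1 p2 \<and> coprime p1 p3 \<and> coprime p2 p3
                    \<and> 1 / real p1 + 1 / real p2 + 1 / real p3 < 1)
                  \<or> (p1 = 2 \<and> p2 = 3 \<and> p3 = 5)"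
  defines "\<phi> \<equiv> phi_inv p1 p2 p3"
      and "P \<equiv> real (p1 * p2 * p3)"
      and "S2 \<equiv> 1 / real p1 ^ 2 + 1 / real p2 ^ 2 + 1 / real p3 ^ 2"
      and "S4 \<equiv> 1 / real p1 ^ 4 + 1 / real p2 ^ 4 + 1 / real p3 ^ 4"
      and "E \<equiv> (if p1 = 2 \<and> p2 = 3 \<and> p3 = 5 then tau_eq_235 else tau_eq_hyp p1 p2 p3)"
  shows "(\<exists>!\<tau>. E \<tau>) \<and> (\<exists>\<tau>. E \<tau> \<and>
           fps_nth \<tau> 0 = 1 \<and>
           fps_nth \<tau> 1 = - (1/4) * (\<phi> + P * (1 - S2)) \<and>
           fps_nth \<tau> 2 = (1/12) * ((3 * \<phi>^2 + 12 * \<phi> - 4) / 8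
                             + (3 * P / 4) * (\<phi> + 2) * (1 - S2)
                             + (P^2 / 8) * (2 * (1 - S4) + 5 * (1 - S2)^2)))"
proof (cases "p1 = 2 \<and> p2 = 3 \<and> p3 = 5")
  case True
  then show ?thesis using main_235 unfolding E_def \<phi>_def P_def S2_def S4_def by simp
next
  case False
  then have h: "p1 > 0 \<and> p2 > 0 \<and> p3 > 0 \<and> coprime p1 p2 \<and> coprime p1 p3 \<and> coprime p2 p3
                    \<and> 1 / real p1 + 1 / real p2 + 1 / real p3 < 1" using cases by blast
  have "E = tau_eq_hyp p1 p2 p3" unfolding E_def by (rule if_not_P[OF False])
  then show ?thesis using main_hyp[of p1 p2 p3] h unfolding \<phi>_def P_def S2_def S4_def by simp
qed

end
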